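(* For GT systems $T_1=(\mathcal L,\mathcal R_1)$ and $T_2=(\mathcal L,\mathcal R_2)$ over a common label alphabet: $T_1\cong T_2$ implies $T_1\simeq_N T_2$, which implies $T_1\simeq_S T_2$, which implies $T_1\simeq_F T_2$. Moreover, none of the converse implications holds in general: there exist GT systems that are normalisation equivalent but not isomorphic, step-wise equivalent but not normalisation equivalent, and semantically equivalent but not step-wise equivalent.
   Context: Fix a label alphabet $\mathcal L=(\mathcal L_V,\mathcal L_E)$ of finite sets. A graph over $\mathcal L$ is $G=(V,E,s,t,l,m,p)$ with $V,E$ finite, $s,t:E\to V$ total, $l:V\rightharpoonup\mathcal L_V$ partial, $m:E\to\mathcal L_E$ total, $p:V\rightharpoonup\{0,1\}$ partial (rootedness). $G$ is a TLRG if $l,p$ are total. Morphisms preserve sources, targets, edge labels, and node labels and rootedness wherever defined; isomorphisms are bijective morphisms whose inverse is a morphism. $\mathcal G^{\oplus}(\mathcal L)$ is the set of isomorphism classes $[G]$ of TLRGs. A rule $r=\langle L\leftarrow K\rightarrow R\rangle$ consists of TLRGs $L,R$ and a graph $K$ that is a subgraph of both (sets included, $s,t,m$ restricted, $l_K\subseteq l_L$, $p_K\subseteq p_L$, likewise for $R$). Rule application to TLRG $G$ via an injective $g:L\to G$ satisfying the dangling condition (no edge outside $g(L)$ incident to a node of $g(V_L\setminus V_K)$): delete images of items of $L$ not in $K$, undefine label/rootedness of $g_V(v)$ where undefined for $v\in V_K$; add disjointly items of $R$ not in $K$, set label/rootedness of $g_V(v)$ to $l_R(v)/p_R(v)$ where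 undefined in $K$; $G\Rightarrow_r H$ if $H$ is isomorphic to the result. A GT system $T=(\mathcal L,\mathcal R)$ has a finite rule set $\mathcal R$. Rules $r_1,r_2$ are isomorphic ($r_1\cong r_2$) if there are isomorphisms $f:L_1\to L_2$, $g:R_1\to R_2$ with $f|_{K_1}=g|_{K_1}$ and $f(K_1)=K_2$. The normal form of $r$ is $r{\downarrow}=\langle L\leftarrow K'\rightarrow R\rangle$ with $K'$ having the nodes of $K$, no edges, and undefined labels and rootedness; $r_1\simeq r_2$ iff $r_1{\downarrow}\cong r_2{\downarrow}$. The induced relation $\to_T$ on $\mathcal G^{\oplus}(\mathcal L)$ is $[G]\to_T[H]$ iff $G\Rightarrow_{\mathcal R}H$. The semantic function $f_T:\mathcal G^{\oplus}(\mathcal L)\to\mathcal P(\mathcal G^{\oplus}(\mathcal L)\cup\{\bot\})$ maps $[G]$ to the set of normal forms of $[G]$ w.r.t. $\to_T$ (those $[H]$ with $[G]\to_T^*[H]$ and $[H]$ irreducible), together with $\bot$ iff there is an infinite $\to_T$-sequence starting at $[G]$. Then: $T_1\cong T_2$ iff $\mathcal R_1/{\cong}=\mathcal R_2/{\cong}$ (equal sets of isomorphism classes of rules); $T_1\simeq_N T_2$ iff $\mathcal R_1/{\simeq}=\mathcal R_2/{\simeq}$; $T_1\simeq_S T_2$ iff $\to_{T_1}=\to_{T_2}$; $T_1\simeq_F T_2$ iff $f_{T_1}=f_{T_2}$. *)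

theory Defs
  imports Main
begin

text \<open>Node and edge identifiers are natural
numbers; every finite graph is isomorphic to one of this form.  Rootedness values
0/1 are represented by False/True.  Node labels and rootedness are partial
(option-valued); only values on the node/edge carriers matter.\<close>

record ('lv, 'le) lgraph =
  gV    :: "nat set"
  gE    :: "nat set"
  gsrc  :: "nat \<Rightarrow> nat"
  gtgt  :: "nat \<Rightarrow> nat"
  glab  :: "nat \<Rightarrow> 'lv option"
  gmrk  :: "nat \<Rightarrow> 'le"
  groot :: "nat \<Rightarrow> bool option"

definition graph_over :: "'lv set \<Rightarrow> 'le set \<Rightarrow> ('lv, 'le) lgraph \<Rightarrow> bool" where
  "graph_over LV LE G \<longleftrightarrow>
     finite (gV G) \<and> finite (gE G) \<and>
     (\<forall>e\<in>gE G. gsrc G e \<in> gV G \<and> gtgt G e \<in> gV G \<and> gmrk G e \<in> LE) \<and>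
     (\<forall>v\<in>gV G. set_option (glab G v) \<subseteq> LV)"

definition tlrg :: "'lv set \<Rightarrow> 'le set \<Rightarrow> ('lv, 'le) lgraph \<Rightarrow> bool" where
  "tlrg LV LE G \<longleftrightarrow> graph_over LV LE G \<and>
     (\<forall>v\<in>gV G. glab G v \<noteq> None \<and> groot G v \<noteq> None)"

definition morph :: "('lv, 'le) lgraph \<Rightarrow> ('lv, 'le) lgraph \<Rightarrow> (nat \<Rightarrow> nat) \<Rightarrow> (nat \<Rightarrow> nat) \<Rightarrow> bool" where
  "morph G H fV fE \<longleftrightarrow>
     fV ` gV G \<subseteq> gV H \<and> fE ` gE G \<subseteq> gE H \<and>
     (\<forall>e\<in>gE G. gsrc H (fE e) = fV (gsrc G e) \<and> gtgt H (fE e) = fV (gtgt G e)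
                \<and> gmrk H (fE e) = gmrk G e) \<and>
     (\<forall>v\<in>gV G. (glab G v \<noteq> None \<longrightarrow> glab H (fV v) = glab G v) \<and>
                (groot G v \<noteq> None \<longrightarrow> groot H (fV v) = groot G v))"

definition iso :: "('lv, 'le) lgraph \<Rightarrow> ('lv, 'le) lgraph \<Rightarrow> (nat \<Rightarrow> nat) \<Rightarrow> (nat \<Rightarrow> nat) \<Rightarrow> bool" where
  "iso G H fV fE \<longleftrightarrow> morph G H fV fE \<and> bij_betw fV (gV G) (gV H) \<and> bij_betw fE (gE G) (gE H) \<and>
     morph H G (inv_into (gV G) fV) (inv_into (gE G) fE)"

definition isomorphic :: "('lv, 'le) lgraph \<Rightarrow> ('lv, 'le) lgraph \<Rightarrow> bool" where
  "isomorphic G H \<longleftrightarrow> (\<exists>fV fE. iso G H fV fE)"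

definition cls :: "'lv set \<Rightarrow> 'le set \<Rightarrow> ('lv, 'le) lgraph \<Rightarrow> ('lv, 'le) lgraph set" where
  "cls LV LE G = {H. tlrg LV LE H \<and> isomorphic G H}"

definition classes :: "'lv set \<Rightarrow> 'le set \<Rightarrow> ('lv, 'le) lgraph set set" where
  "classes LV LE = {cls LV LE G | G. tlrg LV LE G}"

definition subgraph :: "('lv, 'le) lgraph \<Rightarrow> ('lv, 'le) lgraph \<Rightarrow> bool" where
  "subgraph K G \<longleftrightarrow> gV K \<subseteq> gV G \<and> gE K \<subseteq> gE G \<and>
     (\<forall>e\<in>gE K. gsrc K e = gsrc G e \<and> gtgt K e = gtgt G e \<and> gmrk K e = gmrk G e) \<and>
     (\<forall>v\<in>gV K. (glab K v \<noteq> None \<longrightarrow> glab K v = glab G v) \<and>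
                (groot K v \<noteq> None \<longrightarrow> groot K v = groot G v))"

record ('lv, 'le) lrule =
  lhs  :: "('lv, 'le) lgraph"
  intf :: "('lv, 'le) lgraph"
  rhs  :: "('lv, 'le) lgraph"

definition wf_rule :: "'lv set \<Rightarrow> 'le set \<Rightarrow> ('lv, 'le) lrule \<Rightarrow> bool" where
  "wf_rule LV LE r \<longleftrightarrow> tlrg LV LE (lhs r) \<and> tlrg LV LE (rhs r) \<and> graph_over LV LE (intf r) \<and>
     subgraph (intf r) (lhs r) \<and> subgraph (intf r) (rhs r)"

definition gts :: "'lv set \<Rightarrow> 'le set \<Rightarrow> ('lv, 'le) lrule set \<Rightarrow> bool" where
  "gts LV LE Rs \<longleftrightarrow> finite LV \<and> finite LE \<and> finite Rs \<and> (\<forall>r\<in>Rs. wf_rule LV LE r)"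

definition is_match :: "('lv, 'le) lrule \<Rightarrow> ('lv, 'le) lgraph \<Rightarrow> (nat \<Rightarrow> nat) \<Rightarrow> (nat \<Rightarrow> nat) \<Rightarrow> bool" where
  "is_match r G fV fE \<longleftrightarrow> morph (lhs r) G fV fE \<and> inj_on fV (gV (lhs r)) \<and> inj_on fE (gE (lhs r)) \<and>
     (\<forall>e\<in>gE G - fE ` gE (lhs r).
        gsrc G e \<notin> fV ` (gV (lhs r) - gV (intf r)) \<and> gtgt G e \<notin> fV ` (gV (lhs r) - gV (intf r)))"

text \<open>The result of the rule application.  Items kept from G with identifier x get the
identifier 2x, items added from R with identifier y get 2y+1 (disjoint union).\<close>
definition app_res :: "('lv, 'le) lgraph \<Rightarrow> ('lv, 'le) lrule \<Rightarrow> (nat \<Rightarrow> nat) \<Rightarrow> (nat \<Rightarrow> nat) \<Rightarrow> ('lv, 'le) lgraph" where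
  "app_res G r fV fE =
    (let L = lhs r; K = intf r; R = rhs r;
         embR = (\<lambda>v. if v \<in> gV K then 2 * fV v else 2 * v + 1);
         kept = (\<lambda>y. y \<in> fV ` gV K);
         pre = (\<lambda>y. the_inv_into (gV K) fV y)
     in \<lparr> gV = (\<lambda>x. 2 * x) ` (gV G - fV ` (gV L - gV K)) \<union> (\<lambda>v. 2 * v + 1) ` (gV R - gV K),
          gE = (\<lambda>x. 2 * x) ` (gE G - fE ` (gE L - gE K)) \<union> (\<lambda>e. 2 * e + 1) ` (gE R - gE K),
          gsrc = (\<lambda>x. if even x then 2 * gsrc G (x div 2) else embR (gsrc R (x div 2))),
          gtgt = (\<lambda>x. if even x then 2 * gtgt G (x div 2) else embR (gtgt R (x div 2))),
          glab = (\<lambda>x. if even x then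
                        (if kept (x div 2) \<and> glab K (pre (x div 2)) = None
                         then glab R (pre (x div 2)) else glab G (x div 2))
                      else glab R (x div 2)),
          gmrk = (\<lambda>x. if even x then gmrk G (x div 2) else gmrk R (x div 2)),
          groot = (\<lambda>x. if even x then
                        (if kept (x div 2) \<and> groot K (pre (x div 2)) = None
                         then groot R (pre (x div 2)) else groot G (x div 2))
                      else groot R (x div 2)) \<rparr>)"

definition derives :: "'lv set \<Rightarrow> 'le set \<Rightarrow> ('lv, 'le) lrule set \<Rightarrow> ('lv, 'le) lgraph \<Rightarrow> ('lv, 'le) lgraph \<Rightarrow> bool" where
  "derives LV LE Rs G H \<longleftrightarrow> graph_over LV LE H \<and>
     (\<exists>r\<in>Rs. \<exists>fV fE. is_match r G fV fE \<and> isomorphic H (app_res G r fV fE))"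

definition steps :: "'lv set \<Rightarrow> 'le set \<Rightarrow> ('lv, 'le) lrule set \<Rightarrow> (('lv, 'le) lgraph set \<times> ('lv, 'le) lgraph set) set" where
  "steps LV LE Rs = {(cls LV LE G, cls LV LE H) | G H. tlrg LV LE G \<and> derives LV LE Rs G H}"

text \<open>Semantic function; None plays the role of \<bottom>.\<close>
definition sem :: "'lv set \<Rightarrow> 'le set \<Rightarrow> ('lv, 'le) lrule set \<Rightarrow> ('lv, 'le) lgraph set \<Rightarrow> ('lv, 'le) lgraph set option set" where
  "sem LV LE Rs X =
     {Some Y | Y. (X, Y) \<in> (steps LV LE Rs)\<^sup>* \<and> (\<nexists>Z. (Y, Z) \<in> steps LV LE Rs)} \<union>
     (if (\<exists>s :: nat \<Rightarrow> ('lv, 'le) lgraph set. s 0 = X \<and> (\<forall>i. (s i, s (Suc i)) \<in> steps LV LE Rs))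
      then {None} else {})"

definition rule_iso :: "('lv, 'le) lrule \<Rightarrow> ('lv, 'le) lrule \<Rightarrow> bool" where
  "rule_iso r1 r2 \<longleftrightarrow> (\<exists>fV fE hV hE.
     iso (lhs r1) (lhs r2) fV fE \<and> iso (rhs r1) (rhs r2) hV hE \<and>
     (\<forall>v\<in>gV (intf r1). fV v = hV v) \<and> (\<forall>e\<in>gE (intf r1). fE e = hE e) \<and>
     fV ` gV (intf r1) = gV (intf r2) \<and> fE ` gE (intf r1) = gE (intf r2) \<and>
     (\<forall>v\<in>gV (intf r1). glab (intf r2) (fV v) = glab (intf r1) v \<and>
                        groot (intf r2) (fV v) = groot (intf r1) v))"

definition rule_nf :: "('lv, 'le) lrule \<Rightarrow> ('lv, 'le) lrule" where
  "rule_nf r = r\<lparr> intf := (intf r)\<lparr> gE := {}, glab := (\<lambda>_. None), groot := (\<lambda>_. None) \<rparr> \<rparr>"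

definition rule_nf_iso :: "('lv, 'le) lrule \<Rightarrow> ('lv, 'le) lrule \<Rightarrow> bool" where
  "rule_nf_iso r1 r2 \<longleftrightarrow> rule_iso (rule_nf r1) (rule_nf r2)"

definition rule_cls :: "'lv set \<Rightarrow> 'le set \<Rightarrow> (('lv, 'le) lrule \<Rightarrow> ('lv, 'le) lrule \<Rightarrow> bool) \<Rightarrow> ('lv, 'le) lrule \<Rightarrow> ('lv, 'le) lrule set" where
  "rule_cls LV LE rel r = {r'. wf_rule LV LE r' \<and> rel r' r}"

definition gts_iso :: "'lv set \<Rightarrow> 'le set \<Rightarrow> ('lv, 'le) lrule set \<Rightarrow> ('lv, 'le) lrule set \<Rightarrow> bool" where
  "gts_iso LV LE R1 R2 \<longleftrightarrow> rule_cls LV LE rule_iso ` R1 = rule_cls LV LE rule_iso ` R2"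

definition norm_equiv :: "'lv set \<Rightarrow> 'le set \<Rightarrow> ('lv, 'le) lrule set \<Rightarrow> ('lv, 'le) lrule set \<Rightarrow> bool" where
  "norm_equiv LV LE R1 R2 \<longleftrightarrow> rule_cls LV LE rule_nf_iso ` R1 = rule_cls LV LE rule_nf_iso ` R2"

definition step_equiv :: "'lv set \<Rightarrow> 'le set \<Rightarrow> ('lv, 'le) lrule set \<Rightarrow> ('lv, 'le) lrule set \<Rightarrow> bool" where
  "step_equiv LV LE R1 R2 \<longleftrightarrow> steps LV LE R1 = steps LV LE R2"

definition sem_equiv :: "'lv set \<Rightarrow> 'le set \<Rightarrow> ('lv, 'le) lrule set \<Rightarrow> ('lv, 'le) lrule set \<Rightarrow> bool" where
  "sem_equiv LV LE R1 R2 \<longleftrightarrow> (\<forall>X\<in>classes LV LE. sem LV LE R1 X = sem LV LE R2 X)"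

end

theory Submission
  imports Defs
begin


definition stgood :: "('lv,'le) lgraph \<Rightarrow> bool" where
  "stgood G \<longleftrightarrow> (\<forall>e\<in>gE G. gsrc G e \<in> gV G \<and> gtgt G e \<in> gV G)"

lemma graph_over_stgood: "graph_over LV LE G \<Longrightarrow> stgood G"
  by (auto simp: graph_over_def stgood_def)

lemma strict_iso:
  assumes sg: "stgood G" and fi: "inj_on f (gV G)" and gi: "inj_on g (gE G)"
    and fim: "f ` gV G = gV H" and gim: "g ` gE G = gE H"
    and ed: "\<And>e. e\<in>gE G \<Longrightarrow> gsrc H (g e) = f (gsrc G e) \<and> gtgt H (g e) = f (gtgt G e) \<and> gmrk H (g e) = gmrk G e"
    and nd: "\<And>v. v\<in>gV G \<Longrightarrow> glab H (f v) = glab G v \<and> groot H (f v) = groot G v"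
  shows "iso G H f g"
proof -
  have m1: "morph G H f g" using fim gim ed nd by (auto simp: morph_def)
  have a1: "inv_into (gV G) f ` gV H \<subseteq> gV G" using fim by (auto intro: inv_into_into)
  have a2: "inv_into (gE G) g ` gE H \<subseteq> gE G" using gim by (auto intro: inv_into_into)
  have a3: "\<forall>e'\<in>gE H. gsrc G (inv_into (gE G) g e') = inv_into (gV G) f (gsrc H e') \<and>
          gtgt G (inv_into (gE G) g e') = inv_into (gV G) f (gtgt H e') \<and>
          gmrk G (inv_into (gE G) g e') = gmrk H e'"
  proof
    fix e' assume "e' \<in> gE H"
    then obtain e where e: "e \<in> gE G" "e' = g e" using gim by auto
    have s: "gsrc G e \<in> gV G" "gtgt G e \<in> gV G" using sg e by (auto simp: stgood_def)
    show "gsrc G (inv_into (gE G) g e') = inv_into (gV G) f (gsrc H e') \<and>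
          gtgt G (inv_into (gE G) g e') = inv_into (gV G) f (gtgt H e') \<and>
          gmrk G (inv_into (gE G) g e') = gmrk H e'"
      using e s ed[OF e(1)] fi gi by simp
  qed
  have a4: "\<forall>v'\<in>gV H. (glab H v' \<noteq> None \<longrightarrow> glab G (inv_into (gV G) f v') = glab H v') \<and>
          (groot H v' \<noteq> None \<longrightarrow> groot G (inv_into (gV G) f v') = groot H v')"
  proof
    fix v' assume "v' \<in> gV H"
    then obtain v where v: "v \<in> gV G" "v' = f v" using fim by auto
    show "(glab H v' \<noteq> None \<longrightarrow> glab G (inv_into (gV G) f v') = glab H v') \<and>
          (groot H v' \<noteq> None \<longrightarrow> groot G (inv_into (gV G) f v') = groot H v')"
      using v nd[OF v(1)] fi by simp
  qed
  have m2: "morph H G (inv_into (gV G) f) (inv_into (gE G) g)"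
    using a1 a2 a3 a4 unfolding morph_def by blast
  show ?thesis using m1 m2 fi gi fim gim by (simp add: iso_def bij_betw_def)
qed

lemma morph_comp: "morph G H f g \<Longrightarrow> morph H K f' g' \<Longrightarrow> morph G K (f' \<circ> f) (g' \<circ> g)"
  unfolding morph_def by (auto simp: image_subset_iff)

lemma morph_cong:
  assumes "stgood G" "morph G H f g" "\<And>v. v\<in>gV G \<Longrightarrow> f' v = f v" "\<And>e. e\<in>gE G \<Longrightarrow> g' e = g e"
  shows "morph G H f' g'"
  using assms unfolding morph_def stgood_def by (auto simp: image_subset_iff)

lemma iso_sym:
  assumes sg: "stgood G" and i: "iso G H f g"
  shows "iso H G (inv_into (gV G) f) (inv_into (gE G) g)"
proof -
  have b1: "bij_betw f (gV G) (gV H)" and b2: "bij_betw g (gE G) (gE H)" and m: "morph G H f g"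
    and mi: "morph H G (inv_into (gV G) f) (inv_into (gE G) g)" using i by (auto simp: iso_def)
  have "morph G H (inv_into (gV H) (inv_into (gV G) f)) (inv_into (gE H) (inv_into (gE G) g))"
    by (rule morph_cong[OF sg m]) (auto simp: inv_into_inv_into_eq[OF b1] inv_into_inv_into_eq[OF b2])
  then show ?thesis using mi bij_betw_inv_into[OF b1] bij_betw_inv_into[OF b2] by (simp add: iso_def)
qed

lemma iso_trans:
  assumes sK: "stgood K" and i1: "iso G H f g" and i2: "iso H K f' g'"
  shows "iso G K (f' \<circ> f) (g' \<circ> g)"
proof -
  have b1: "bij_betw f (gV G) (gV H)" and b2: "bij_betw g (gE G) (gE H)" and m: "morph G H f g"
    and mi: "morph H G (inv_into (gV G) f) (inv_into (gE G) g)" using i1 by (auto simp: iso_def)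
  have c1: "bij_betw f' (gV H) (gV K)" and c2: "bij_betw g' (gE H) (gE K)" and m': "morph H K f' g'"
    and mi': "morph K H (inv_into (gV H) f') (inv_into (gE H) g')" using i2 by (auto simp: iso_def)
  have d1: "bij_betw (f' \<circ> f) (gV G) (gV K)" using b1 c1 by (rule bij_betw_trans)
  have d2: "bij_betw (g' \<circ> g) (gE G) (gE K)" using b2 c2 by (rule bij_betw_trans)
  have mc: "morph K G (inv_into (gV G) f \<circ> inv_into (gV H) f') (inv_into (gE G) g \<circ> inv_into (gE H) g')"
    using morph_comp[OF mi' mi] .
  have "morph K G (inv_into (gV G) (f' \<circ> f)) (inv_into (gE G) (g' \<circ> g))"
  proof (rule morph_cong[OF sK mc])
    fix w assume "w \<in> gV K"
    then obtain u where u: "u \<in> gV G" "w = f' (f u)" using d1 by (auto simp: bij_betw_def)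
    have fu: "f u \<in> gV H" using b1 u by (auto simp: bij_betw_def)
    have "inv_into (gV G) (f' \<circ> f) ((f' \<circ> f) u) = u"
      by (rule inv_into_f_f) (use d1 u in \<open>auto simp: bij_betw_def\<close>)
    then show "inv_into (gV G) (f' \<circ> f) w = (inv_into (gV G) f \<circ> inv_into (gV H) f') w"
      using u fu b1 c1 by (simp add: bij_betw_def)
  next
    fix w assume "w \<in> gE K"
    then obtain u where u: "u \<in> gE G" "w = g' (g u)" using d2 by (auto simp: bij_betw_def)
    have gu: "g u \<in> gE H" using b2 u by (auto simp: bij_betw_def)
    have "inv_into (gE G) (g' \<circ> g) ((g' \<circ> g) u) = u"
      by (rule inv_into_f_f) (use d2 u in \<open>auto simp: bij_betw_def\<close>)
    then show "inv_into (gE G) (g' \<circ> g) w = (inv_into (gE G) g \<circ> inv_into (gE H) g') w"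
      using u gu b2 c2 by (simp add: bij_betw_def)
  qed
  then show ?thesis using morph_comp[OF m m'] d1 d2 by (simp add: iso_def)
qed



lemma app_res_gV: "gV (app_res G r fV fE) = (\<lambda>x. 2 * x) ` (gV G - fV ` (gV (lhs r) - gV (intf r))) \<union> (\<lambda>v. 2 * v + 1) ` (gV (rhs r) - gV (intf r))"
  by (simp add: app_res_def Let_def)
lemma app_res_gE: "gE (app_res G r fV fE) = (\<lambda>x. 2 * x) ` (gE G - fE ` (gE (lhs r) - gE (intf r))) \<union> (\<lambda>e. 2 * e + 1) ` (gE (rhs r) - gE (intf r))"
  by (simp add: app_res_def Let_def)
lemma app_res_even:
  "gsrc (app_res G r fV fE) (2*x) = 2 * gsrc G x"
  "gtgt (app_res G r fV fE) (2*x) = 2 * gtgt G x"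
  "gmrk (app_res G r fV fE) (2*x) = gmrk G x"
  "glab (app_res G r fV fE) (2*x) = (if x \<in> fV ` gV (intf r) \<and> glab (intf r) (the_inv_into (gV (intf r)) fV x) = None
                         then glab (rhs r) (the_inv_into (gV (intf r)) fV x) else glab G x)"
  "groot (app_res G r fV fE) (2*x) = (if x \<in> fV ` gV (intf r) \<and> groot (intf r) (the_inv_into (gV (intf r)) fV x) = None
                         then groot (rhs r) (the_inv_into (gV (intf r)) fV x) else groot G x)"
  by (simp_all add: app_res_def Let_def)
lemma app_res_odd:
  "gsrc (app_res G r fV fE) (Suc (2*x)) = (if gsrc (rhs r) x \<in> gV (intf r) then 2 * fV (gsrc (rhs r) x) else Suc (2 * gsrc (rhs r) x))"
  "gtgt (app_res G r fV fE) (Suc (2*x)) = (if gtgt (rhs r) x \<in> gV (intf r) then 2 * fV (gtgt (rhs r) x) else Suc (2 * gtgt (rhs r) x))"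
  "gmrk (app_res G r fV fE) (Suc (2*x)) = gmrk (rhs r) x"
  "glab (app_res G r fV fE) (Suc (2*x)) = glab (rhs r) x"
  "groot (app_res G r fV fE) (Suc (2*x)) = groot (rhs r) x"
  by (simp_all add: app_res_def Let_def)

definition rwf :: "('lv,'le) lrule \<Rightarrow> bool" where
  "rwf r \<longleftrightarrow> stgood (lhs r) \<and> stgood (rhs r) \<and> stgood (intf r) \<and>
     subgraph (intf r) (lhs r) \<and> subgraph (intf r) (rhs r)"

lemma wf_rule_rwf: "wf_rule LV LE r \<Longrightarrow> rwf r"
  by (auto simp: wf_rule_def rwf_def tlrg_def intro: graph_over_stgood)

lemma app_res_stgood:
  assumes sG: "stgood G" and rw: "rwf r" and m: "is_match r G fV fE"
  shows "stgood (app_res G r fV fE)"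
proof -
  let ?L = "lhs r" and ?K = "intf r" and ?R = "rhs r"
  have mo: "morph ?L G fV fE" and ij: "inj_on fV (gV ?L)" and ie: "inj_on fE (gE ?L)"
    and dg: "\<forall>e\<in>gE G - fE ` gE ?L. gsrc G e \<notin> fV ` (gV ?L - gV ?K) \<and> gtgt G e \<notin> fV ` (gV ?L - gV ?K)"
    using m by (auto simp: is_match_def)
  have sL: "stgood ?L" and sR: "stgood ?R" and sK: "stgood ?K" and kl: "subgraph ?K ?L" and kr: "subgraph ?K ?R"
    using rw by (auto simp: rwf_def)
  have KL: "gV ?K \<subseteq> gV ?L" "gE ?K \<subseteq> gE ?L" using kl by (auto simp: subgraph_def)
  have KR: "gV ?K \<subseteq> gV ?R" "gE ?K \<subseteq> gE ?R" using kr by (auto simp: subgraph_def)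
  have kept: "\<And>v. v \<in> gV ?K \<Longrightarrow> 2 * fV v \<in> gV (app_res G r fV fE)"
  proof -
    fix v assume v: "v \<in> gV ?K"
    have "fV v \<in> gV G" using mo v KL by (auto simp: morph_def)
    moreover have "fV v \<notin> fV ` (gV ?L - gV ?K)"
      using v KL ij by (auto simp: inj_on_def)
    ultimately show "2 * fV v \<in> gV (app_res G r fV fE)" by (simp add: app_res_gV)
  qed
  have rnode: "\<And>v. v \<in> gV ?R \<Longrightarrow> (if v \<in> gV ?K then 2 * fV v else Suc (2 * v)) \<in> gV (app_res G r fV fE)"
    using kept by (auto simp: app_res_gV)
  have gnode: "\<And>w. w \<in> gV G \<Longrightarrow> w \<notin> fV ` (gV ?L - gV ?K) \<Longrightarrow> 2 * w \<in> gV (app_res G r fV fE)"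
    by (simp add: app_res_gV)
  have evn: "gsrc G x \<in> gV G \<and> gsrc G x \<notin> fV ` (gV ?L - gV ?K) \<and> gtgt G x \<in> gV G \<and> gtgt G x \<notin> fV ` (gV ?L - gV ?K)"
    if x: "x \<in> gE G" "x \<notin> fE ` (gE ?L - gE ?K)" for x
  proof (cases "x \<in> fE ` gE ?L")
    case True
    then obtain e where e: "e \<in> gE ?L" "x = fE e" by auto
    have eK: "e \<in> gE ?K" using e x by auto
    have s: "gsrc ?K e \<in> gV ?K" "gtgt ?K e \<in> gV ?K" using sK eK by (auto simp: stgood_def)
    have "gsrc G x = fV (gsrc ?K e)" "gtgt G x = fV (gtgt ?K e)"
      using mo e eK kl by (auto simp: morph_def subgraph_def)
    then show ?thesis using s KL ij x sG by (auto simp: inj_on_def stgood_def)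
  next
    case False
    then show ?thesis using dg x sG by (auto simp: stgood_def)
  qed
  show ?thesis unfolding stgood_def
  proof
    fix y assume y: "y \<in> gE (app_res G r fV fE)"
    show "gsrc (app_res G r fV fE) y \<in> gV (app_res G r fV fE) \<and> gtgt (app_res G r fV fE) y \<in> gV (app_res G r fV fE)"
    proof (cases "y \<in> (\<lambda>x. 2 * x) ` (gE G - fE ` (gE ?L - gE ?K))")
      case True
      then obtain x where x: "x \<in> gE G" "x \<notin> fE ` (gE ?L - gE ?K)" "y = 2 * x" by auto
      show ?thesis using evn[OF x(1,2)] gnode x(3) by (simp add: app_res_even)
    next
      case False
      then obtain e where e: "e \<in> gE ?R" "e \<notin> gE ?K" "y = 2 * e + 1" using y by (auto simp: app_res_gE)
      have "gsrc ?R e \<in> gV ?R" "gtgt ?R e \<in> gV ?R" using sR e by (auto simp: stgood_def)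
      then show ?thesis using rnode e(3) by (simp only: app_res_odd simp_thms Suc_eq_plus1[symmetric])
    qed
  qed
qed



lemma rule_nf_simps[simp]:
  "lhs (rule_nf r) = lhs r" "rhs (rule_nf r) = rhs r"
  "gV (intf (rule_nf r)) = gV (intf r)" "gE (intf (rule_nf r)) = {}"
  "glab (intf (rule_nf r)) = (\<lambda>_. None)" "groot (intf (rule_nf r)) = (\<lambda>_. None)"
  "gsrc (intf (rule_nf r)) = gsrc (intf r)" "gtgt (intf (rule_nf r)) = gtgt (intf r)"
  by (simp_all add: rule_nf_def)

lemma is_match_nf: "is_match (rule_nf r) G fV fE \<longleftrightarrow> is_match r G fV fE"
  by (simp add: is_match_def)

lemma rwf_nf: "rwf r \<Longrightarrow> rwf (rule_nf r)"
  by (auto simp: rwf_def stgood_def subgraph_def)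

lemma nf_app_iso:
  assumes sG: "stgood G" and rw: "rwf r" and m: "is_match r G fV fE"
  shows "iso (app_res G (rule_nf r) fV fE) (app_res G r fV fE) id
           (\<lambda>y. if odd y \<and> y div 2 \<in> gE (intf r) then 2 * fE (y div 2) else y)"
proof -
  let ?L = "lhs r" and ?K = "intf r" and ?R = "rhs r"
  let ?A = "app_res G r fV fE" and ?B = "app_res G (rule_nf r) fV fE"
  define psi where "psi = (\<lambda>y::nat. if odd y \<and> y div 2 \<in> gE (intf r) then 2 * fE (y div 2) else y)"
  have p1: "psi (2*x) = 2*x" for x by (simp add: psi_def)
  have p2: "psi (Suc (2*e)) = (if e \<in> gE ?K then 2 * fE e else Suc (2*e))" for e by (simp add: psi_def)
  have mo: "morph ?L G fV fE" and ij: "inj_on fV (gV ?L)" and ie: "inj_on fE (gE ?L)"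
    using m by (auto simp: is_match_def)
  have sL: "stgood ?L" and sR: "stgood ?R" and sK: "stgood ?K" and kl: "subgraph ?K ?L" and kr: "subgraph ?K ?R"
    using rw by (auto simp: rwf_def)
  have KL: "gV ?K \<subseteq> gV ?L" "gE ?K \<subseteq> gE ?L" using kl by (auto simp: subgraph_def)
  have KR: "gV ?K \<subseteq> gV ?R" "gE ?K \<subseteq> gE ?R" using kr by (auto simp: subgraph_def)
  have ijK: "inj_on fV (gV ?K)" using inj_on_subset[OF ij KL(1)] .
  have sB: "stgood ?B" using app_res_stgood[OF sG rwf_nf[OF rw]] m by (simp add: is_match_nf)
  have gEB: "gE ?B = (\<lambda>x. 2 * x) ` (gE G - fE ` gE ?L) \<union> (\<lambda>e. Suc (2 * e)) ` gE ?R"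
    by (simp add: app_res_gE)
  have gEA: "gE ?A = (\<lambda>x. 2 * x) ` (gE G - fE ` (gE ?L - gE ?K)) \<union> (\<lambda>e. Suc (2 * e)) ` (gE ?R - gE ?K)"
    by (simp add: app_res_gE)
  have fEG: "fE e \<in> gE G" if "e \<in> gE ?L" for e using mo that by (auto simp: morph_def)
  have inj: "inj_on psi (gE ?B)"
  proof (rule inj_onI)
    fix y1 y2 assume y1: "y1 \<in> gE ?B" and y2: "y2 \<in> gE ?B" and eq: "psi y1 = psi y2"
    show "y1 = y2"
    proof (cases "y1 \<in> (\<lambda>x. 2 * x) ` (gE G - fE ` gE ?L)")
      case c1: True
      then obtain x1 where x1: "x1 \<in> gE G" "x1 \<notin> fE ` gE ?L" "y1 = 2 * x1" by auto
      show ?thesis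
      proof (cases "y2 \<in> (\<lambda>x. 2 * x) ` (gE G - fE ` gE ?L)")
        case True
        then show ?thesis using x1 eq by (auto simp: p1)
      next
        case False
        then obtain e2 where e2: "e2 \<in> gE ?R" "y2 = Suc (2 * e2)" using y2 gEB by auto
        show ?thesis using eq x1 e2 KL by (auto simp: p1 p2 split: if_splits; presburger)
      qed
    next
      case c1: False
      then obtain e1 where e1: "e1 \<in> gE ?R" "y1 = Suc (2 * e1)" using y1 gEB by auto
      show ?thesis
      proof (cases "y2 \<in> (\<lambda>x. 2 * x) ` (gE G - fE ` gE ?L)")
        case True
        then obtain x2 where x2: "x2 \<in> gE G" "x2 \<notin> fE ` gE ?L" "y2 = 2 * x2" by auto
        show ?thesis using eq x2 e1 KL by (auto simp: p1 p2 split: if_splits; presburger)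
      next
        case False
        then obtain e2 where e2: "e2 \<in> gE ?R" "y2 = Suc (2 * e2)" using y2 gEB by auto
        have "e1 = e2"
        proof (cases "e1 \<in> gE ?K"; cases "e2 \<in> gE ?K")
          assume a: "e1 \<in> gE ?K" "e2 \<in> gE ?K"
          then have "fE e1 = fE e2" using eq e1 e2 by (simp add: p2)
          then show ?thesis using a KL ie by (meson inj_onD subsetD)
        next
          assume a: "e1 \<in> gE ?K" "e2 \<notin> gE ?K"
          then have "2 * fE e1 = Suc (2 * e2)" using eq e1 e2 by (simp add: p2)
          then show ?thesis by presburger
        next
          assume a: "e1 \<notin> gE ?K" "e2 \<in> gE ?K"
          then have "Suc (2 * e1) = 2 * fE e2" using eq e1 e2 by (simp add: p2)
          then show ?thesis by presburger
        next
          assume a: "e1 \<notin> gE ?K" "e2 \<notin> gE ?K"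
          then show ?thesis using eq e1 e2 by (simp add: p2)
        qed
        then show ?thesis using e1 e2 by simp
      qed
    qed
  qed
  have img: "psi ` gE ?B = gE ?A"
  proof
    show "psi ` gE ?B \<subseteq> gE ?A"
    proof
      fix z assume "z \<in> psi ` gE ?B"
      then obtain y where y: "y \<in> gE ?B" "z = psi y" by auto
      show "z \<in> gE ?A"
      proof (cases "y \<in> (\<lambda>x. 2 * x) ` (gE G - fE ` gE ?L)")
        case True
        then show ?thesis using y gEA by (auto simp: p1)
      next
        case False
        then obtain e where e: "e \<in> gE ?R" "y = Suc (2 * e)" using y gEB by auto
        show ?thesis
        proof (cases "e \<in> gE ?K")
          case True
          have "fE e \<notin> fE ` (gE ?L - gE ?K)" using True KL ie by (auto simp: inj_on_def)
          then show ?thesis using y e True gEA fEG KL by (auto simp: p2)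
        next
          case False
          then show ?thesis using y e gEA by (auto simp: p2)
        qed
      qed
    qed
  next
    show "gE ?A \<subseteq> psi ` gE ?B"
    proof
      fix z assume z: "z \<in> gE ?A"
      show "z \<in> psi ` gE ?B"
      proof (cases "z \<in> (\<lambda>x. 2 * x) ` (gE G - fE ` (gE ?L - gE ?K))")
        case True
        then obtain x where x: "x \<in> gE G" "x \<notin> fE ` (gE ?L - gE ?K)" "z = 2 * x" by auto
        show ?thesis
        proof (cases "x \<in> fE ` gE ?L")
          case True
          then obtain e where e: "e \<in> gE ?L" "x = fE e" by auto
          have "e \<in> gE ?K" using e x by auto
          then have "psi (Suc (2*e)) = z" "Suc (2*e) \<in> gE ?B" using x e KR by (auto simp: p2 gEB)
          then show ?thesis by force
        next
          case False
          then have "psi (2*x) = z" "2*x \<in> gE ?B" using x by (auto simp: p1 gEB)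
          then show ?thesis by force
        qed
      next
        case False
        then obtain e where e: "e \<in> gE ?R" "e \<notin> gE ?K" "z = Suc (2 * e)" using z gEA by auto
        then have "psi (Suc (2*e)) = z" "Suc (2*e) \<in> gE ?B" by (auto simp: p2 gEB)
        then show ?thesis by force
      qed
    qed
  qed
  have edges: "gsrc ?A (psi y) = id (gsrc ?B y) \<and> gtgt ?A (psi y) = id (gtgt ?B y) \<and> gmrk ?A (psi y) = gmrk ?B y"
    if y: "y \<in> gE ?B" for y
  proof (cases "y \<in> (\<lambda>x. 2 * x) ` (gE G - fE ` gE ?L)")
    case True
    then show ?thesis by (auto simp: p1 app_res_even)
  next
    case False
    then obtain e where e: "e \<in> gE ?R" "y = Suc (2 * e)" using y gEB by auto
    show ?thesis
    proof (cases "e \<in> gE ?K")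
      case True
      have s: "gsrc ?K e \<in> gV ?K" "gtgt ?K e \<in> gV ?K" using sK True by (auto simp: stgood_def)
      have eq: "gsrc G (fE e) = fV (gsrc ?K e)" "gtgt G (fE e) = fV (gtgt ?K e)" "gmrk G (fE e) = gmrk ?K e"
        using mo True KL kl by (auto simp: morph_def subgraph_def)
      have eq2: "gsrc ?R e = gsrc ?K e" "gtgt ?R e = gtgt ?K e" "gmrk ?R e = gmrk ?K e"
        using kr True by (auto simp: subgraph_def)
      show ?thesis using e True s eq eq2 by (simp add: p2 app_res_even app_res_odd)
    next
      case False
      then show ?thesis using e by (simp add: p2 app_res_odd)
    qed
  qed
  have nodes: "glab ?A (id v) = glab ?B v \<and> groot ?A (id v) = groot ?B v" if v: "v \<in> gV ?B" for v
  proof (cases "v \<in> (\<lambda>x. 2 * x) ` (gV G - fV ` (gV ?L - gV ?K))")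
    case True
    then obtain x where x: "v = 2 * x" by auto
    show ?thesis
    proof (cases "x \<in> fV ` gV ?K")
      case True
      then obtain u where u: "u \<in> gV ?K" "x = fV u" by auto
      have pre: "the_inv_into (gV ?K) fV x = u" using u ijK by (simp add: the_inv_into_f_f)
      have l1: "glab ?K u \<noteq> None \<Longrightarrow> glab G (fV u) = glab ?R u"
        using u mo kl kr KL by (auto simp: morph_def subgraph_def)
      have l2: "groot ?K u \<noteq> None \<Longrightarrow> groot G (fV u) = groot ?R u"
        using u mo kl kr KL by (auto simp: morph_def subgraph_def)
      show ?thesis using x u pre l1 l2 by (auto simp: app_res_even)
    next
      case False
      then show ?thesis using x by (simp add: app_res_even)
    qed
  next
    case False
    then obtain w where "v = Suc (2 * w)" using v by (auto simp: app_res_gV)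
    then show ?thesis by (simp add: app_res_odd)
  qed
  have "iso ?B ?A id psi"
    by (rule strict_iso[OF sB _ inj _ img edges nodes]) (auto simp: app_res_gV)
  then show ?thesis by (simp add: psi_def)
qed



lemma iso_lab:
  assumes i: "iso G H f g" and v: "v \<in> gV G"
  shows "glab H (f v) = glab G v \<and> groot H (f v) = groot G v"
proof -
  have m: "morph G H f g" and mi: "morph H G (inv_into (gV G) f) (inv_into (gE G) g)"
    and b: "bij_betw f (gV G) (gV H)" using i by (auto simp: iso_def)
  have fv: "f v \<in> gV H" using b v by (auto simp: bij_betw_def)
  have iv: "inv_into (gV G) f (f v) = v" using b v by (simp add: bij_betw_def)
  have a: "glab G v \<noteq> None \<Longrightarrow> glab H (f v) = glab G v" "groot G v \<noteq> None \<Longrightarrow> groot H (f v) = groot G v"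
    using m v by (auto simp: morph_def)
  have c: "glab H (f v) \<noteq> None \<Longrightarrow> glab G v = glab H (f v)" "groot H (f v) \<noteq> None \<Longrightarrow> groot G v = groot H (f v)"
    using mi fv iv unfolding morph_def by metis+
  show ?thesis using a c by fastforce
qed

lemma iso_edge:
  assumes i: "iso G H f g" and e: "e \<in> gE G"
  shows "gsrc H (g e) = f (gsrc G e) \<and> gtgt H (g e) = f (gtgt G e) \<and> gmrk H (g e) = gmrk G e"
  using assms by (auto simp: iso_def morph_def)

lemma nf_iso_app:
  assumes sG: "stgood G" and rw1: "rwf r1" and rw2: "rwf r2"
    and ri: "rule_iso (rule_nf r1) (rule_nf r2)" and m: "is_match r1 G fV1 fE1"
  shows "\<exists>fV2 fE2 phi psi. is_match r2 G fV2 fE2 \<and>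
           iso (app_res G (rule_nf r1) fV1 fE1) (app_res G (rule_nf r2) fV2 fE2) phi psi"
proof -
  let ?L1 = "lhs r1" and ?K1 = "intf r1" and ?R1 = "rhs r1"
  let ?L2 = "lhs r2" and ?K2 = "intf r2" and ?R2 = "rhs r2"
  obtain fV fE hV hE where iL: "iso ?L1 ?L2 fV fE" and iR: "iso ?R1 ?R2 hV hE"
    and fh: "\<forall>v\<in>gV ?K1. fV v = hV v" and fK: "fV ` gV ?K1 = gV ?K2"
    using ri unfolding rule_iso_def by auto
  have bL: "bij_betw fV (gV ?L1) (gV ?L2)" and bLE: "bij_betw fE (gE ?L1) (gE ?L2)"
    and miL: "morph ?L2 ?L1 (inv_into (gV ?L1) fV) (inv_into (gE ?L1) fE)" using iL by (auto simp: iso_def)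
  have bR: "bij_betw hV (gV ?R1) (gV ?R2)" and bRE: "bij_betw hE (gE ?R1) (gE ?R2)"
    using iR by (auto simp: iso_def)
  have mo: "morph ?L1 G fV1 fE1" and ij: "inj_on fV1 (gV ?L1)" and ie: "inj_on fE1 (gE ?L1)"
    and dg: "\<forall>e\<in>gE G - fE1 ` gE ?L1. gsrc G e \<notin> fV1 ` (gV ?L1 - gV ?K1) \<and> gtgt G e \<notin> fV1 ` (gV ?L1 - gV ?K1)"
    using m by (auto simp: is_match_def)
  have K1L: "gV ?K1 \<subseteq> gV ?L1" and K1R: "gV ?K1 \<subseteq> gV ?R1" and K2L: "gV ?K2 \<subseteq> gV ?L2" and K2R: "gV ?K2 \<subseteq> gV ?R2"
    using rw1 rw2 by (auto simp: rwf_def subgraph_def)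
  have sR1: "stgood ?R1" using rw1 by (simp add: rwf_def)
  define fV2 where "fV2 = fV1 \<circ> inv_into (gV ?L1) fV"
  define fE2 where "fE2 = fE1 \<circ> inv_into (gE ?L1) fE"
  have ivL: "bij_betw (inv_into (gV ?L1) fV) (gV ?L2) (gV ?L1)" using bij_betw_inv_into[OF bL] .
  have ivLE: "bij_betw (inv_into (gE ?L1) fE) (gE ?L2) (gE ?L1)" using bij_betw_inv_into[OF bLE] .
  have injfV: "inj_on fV (gV ?L1)" using bL by (simp add: bij_betw_def)
  have invK: "inv_into (gV ?L1) fV ` gV ?K2 = gV ?K1"
    using inv_into_image_cancel[OF injfV K1L] fK by simp
  have fV2K: "fV2 (fV u) = fV1 u" if "u \<in> gV ?L1" for u using that injfV by (simp add: fV2_def)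
  have key1: "fV2 ` (gV ?L2 - gV ?K2) = fV1 ` (gV ?L1 - gV ?K1)"
  proof -
    have "inv_into (gV ?L1) fV ` (gV ?L2 - gV ?K2) = inv_into (gV ?L1) fV ` gV ?L2 - inv_into (gV ?L1) fV ` gV ?K2"
      by (rule inj_on_image_set_diff) (use ivL K2L in \<open>auto simp: bij_betw_def\<close>)
    also have "\<dots> = gV ?L1 - gV ?K1" using ivL invK by (simp add: bij_betw_def)
    finally show ?thesis unfolding fV2_def image_comp[symmetric] by simp
  qed
  have key2: "fV2 ` gV ?K2 = fV1 ` gV ?K1" using invK unfolding fV2_def image_comp[symmetric] by simp
  have keyE: "fE2 ` gE ?L2 = fE1 ` gE ?L1" using ivLE unfolding fE2_def image_comp[symmetric] by (simp add: bij_betw_def)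
  have m2: "is_match r2 G fV2 fE2"
    unfolding is_match_def
  proof (intro conjI)
    show "morph ?L2 G fV2 fE2" unfolding fV2_def fE2_def by (rule morph_comp[OF miL mo])
    show "inj_on fV2 (gV ?L2)" unfolding fV2_def
      by (rule comp_inj_on) (use ivL ij in \<open>auto simp: bij_betw_def\<close>)
    show "inj_on fE2 (gE ?L2)" unfolding fE2_def
      by (rule comp_inj_on) (use ivLE ie in \<open>auto simp: bij_betw_def\<close>)
    show "\<forall>e\<in>gE G - fE2 ` gE ?L2. gsrc G e \<notin> fV2 ` (gV ?L2 - gV ?K2) \<and> gtgt G e \<notin> fV2 ` (gV ?L2 - gV ?K2)"
      using dg key1 keyE by simp
  qed
  have ij2: "inj_on fV2 (gV ?K2)" using m2 K2L by (auto simp: is_match_def intro: inj_on_subset)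
  have ijK1: "inj_on fV1 (gV ?K1)" using ij K1L by (auto intro: inj_on_subset)
  have injhV: "inj_on hV (gV ?R1)" using bR by (simp add: bij_betw_def)
  have hK: "hV ` gV ?K1 = gV ?K2" using fK fh by (metis image_cong)
  have hdiff: "hV ` (gV ?R1 - gV ?K1) = gV ?R2 - gV ?K2"
    using inj_on_image_set_diff[OF injhV _ K1R] bR hK by (simp add: bij_betw_def)
  let ?A1 = "app_res G (rule_nf r1) fV1 fE1" and ?A2 = "app_res G (rule_nf r2) fV2 fE2"
  define phi where "phi = (\<lambda>y::nat. if even y then y else Suc (2 * hV (y div 2)))"
  define psi where "psi = (\<lambda>y::nat. if even y then y else Suc (2 * hE (y div 2)))"
  have ph1: "phi (2*x) = 2*x" "psi (2*x) = 2*x" for x by (simp_all add: phi_def psi_def)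
  have ph2: "phi (Suc (2*x)) = Suc (2 * hV x)" "psi (Suc (2*x)) = Suc (2 * hE x)" for x by (simp_all add: phi_def psi_def)
  have gV1: "gV ?A1 = (\<lambda>x. 2 * x) ` (gV G - fV1 ` (gV ?L1 - gV ?K1)) \<union> (\<lambda>e. Suc (2 * e)) ` (gV ?R1 - gV ?K1)"
    by (simp add: app_res_gV)
  have gV2: "gV ?A2 = (\<lambda>x. 2 * x) ` (gV G - fV1 ` (gV ?L1 - gV ?K1)) \<union> (\<lambda>e. Suc (2 * e)) ` (hV ` (gV ?R1 - gV ?K1))"
    by (simp add: app_res_gV key1 hdiff)
  have gE1: "gE ?A1 = (\<lambda>x. 2 * x) ` (gE G - fE1 ` gE ?L1) \<union> (\<lambda>e. Suc (2 * e)) ` gE ?R1"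
    by (simp add: app_res_gE)
  have gE2: "gE ?A2 = (\<lambda>x. 2 * x) ` (gE G - fE1 ` gE ?L1) \<union> (\<lambda>e. Suc (2 * e)) ` (hE ` gE ?R1)"
    using bRE by (simp add: app_res_gE keyE bij_betw_def)
  have sA1: "stgood ?A1" using app_res_stgood[OF sG rwf_nf[OF rw1]] m by (simp add: is_match_nf)
  have injphi: "inj_on phi (gV ?A1)"
  proof (rule inj_onI)
    fix a b assume a: "a \<in> gV ?A1" and b: "b \<in> gV ?A1" and eq: "phi a = phi b"
    show "a = b"
    proof (cases "even a"; cases "even b")
      assume "even a" "even b" then show ?thesis using eq by (simp add: phi_def)
    next
      assume "even a" "odd b" moreover have "even (phi a) = even (phi b)" using eq by simp
      ultimately show ?thesis by (simp add: phi_def)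
    next
      assume "odd a" "even b" moreover have "even (phi a) = even (phi b)" using eq by simp
      ultimately show ?thesis by (simp add: phi_def)
    next
      assume oa: "odd a" and ob: "odd b"
      then obtain x y where x: "a = Suc (2*x)" "x \<in> gV ?R1" and y: "b = Suc (2*y)" "y \<in> gV ?R1"
        using a b gV1 by auto
      then have "hV x = hV y" using eq by (simp add: ph2)
      then show ?thesis using x y injhV by (simp add: inj_on_def)
    qed
  qed
  have injpsi: "inj_on psi (gE ?A1)"
  proof (rule inj_onI)
    fix a b assume a: "a \<in> gE ?A1" and b: "b \<in> gE ?A1" and eq: "psi a = psi b"
    show "a = b"
    proof (cases "even a"; cases "even b")
      assume "even a" "even b" then show ?thesis using eq by (simp add: psi_def)
    next
      assume "even a" "odd b" moreover have "even (psi a) = even (psi b)" using eq by simp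
      ultimately show ?thesis by (simp add: psi_def)
    next
      assume "odd a" "even b" moreover have "even (psi a) = even (psi b)" using eq by simp
      ultimately show ?thesis by (simp add: psi_def)
    next
      assume oa: "odd a" and ob: "odd b"
      then obtain x y where x: "a = Suc (2*x)" "x \<in> gE ?R1" and y: "b = Suc (2*y)" "y \<in> gE ?R1"
        using a b gE1 by auto
      then have "hE x = hE y" using eq by (simp add: ph2)
      then show ?thesis using x y bRE by (simp add: inj_on_def bij_betw_def)
    qed
  qed
  have imphi: "phi ` gV ?A1 = gV ?A2"
    unfolding gV1 gV2 image_Un image_image ph1 ph2 by simp
  have impsi: "psi ` gE ?A1 = gE ?A2"
    unfolding gE1 gE2 image_Un image_image ph1 ph2 by simp
  have edges: "gsrc ?A2 (psi y) = phi (gsrc ?A1 y) \<and> gtgt ?A2 (psi y) = phi (gtgt ?A1 y) \<and> gmrk ?A2 (psi y) = gmrk ?A1 y"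
    if y: "y \<in> gE ?A1" for y
  proof (cases "even y")
    case True
    then obtain x where "y = 2 * x" by auto
    then show ?thesis by (simp add: ph1 app_res_even)
  next
    case False
    then obtain e where e: "y = Suc (2*e)" "e \<in> gE ?R1" using y gE1 by auto
    have ie: "gsrc ?R2 (hE e) = hV (gsrc ?R1 e) \<and> gtgt ?R2 (hE e) = hV (gtgt ?R1 e) \<and> gmrk ?R2 (hE e) = gmrk ?R1 e"
      using iso_edge[OF iR e(2)] .
    have emb: "(if hV s \<in> gV ?K2 then 2 * fV2 (hV s) else Suc (2 * hV s)) =
               phi (if s \<in> gV ?K1 then 2 * fV1 s else Suc (2 * s))" if s: "s \<in> gV ?R1" for s
    proof (cases "s \<in> gV ?K1")
      case True
      then have "hV s = fV s" using fh by auto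
      then show ?thesis using True fK fV2K K1L by (auto simp: ph1)
    next
      case False
      have "hV s \<notin> gV ?K2" using False s hK K1R injhV by (auto simp: inj_on_def)
      then show ?thesis using False by (simp add: ph2)
    qed
    have ss: "gsrc ?R1 e \<in> gV ?R1" "gtgt ?R1 e \<in> gV ?R1" using sR1 e by (auto simp: stgood_def)
    have a1: "gsrc ?A2 (psi y) = (if gsrc ?R2 (hE e) \<in> gV ?K2 then 2 * fV2 (gsrc ?R2 (hE e)) else Suc (2 * gsrc ?R2 (hE e)))"
      "gtgt ?A2 (psi y) = (if gtgt ?R2 (hE e) \<in> gV ?K2 then 2 * fV2 (gtgt ?R2 (hE e)) else Suc (2 * gtgt ?R2 (hE e)))"
      "gmrk ?A2 (psi y) = gmrk ?R2 (hE e)"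
      by (simp_all only: e(1) ph2 app_res_odd rule_nf_simps)
    have a2: "gsrc ?A1 y = (if gsrc ?R1 e \<in> gV ?K1 then 2 * fV1 (gsrc ?R1 e) else Suc (2 * gsrc ?R1 e))"
      "gtgt ?A1 y = (if gtgt ?R1 e \<in> gV ?K1 then 2 * fV1 (gtgt ?R1 e) else Suc (2 * gtgt ?R1 e))"
      "gmrk ?A1 y = gmrk ?R1 e"
      by (simp_all only: e(1) app_res_odd rule_nf_simps)
    show ?thesis unfolding a1 a2 by (simp only: ie emb[OF ss(1)] emb[OF ss(2)] simp_thms)
  qed
  have nodes: "glab ?A2 (phi v) = glab ?A1 v \<and> groot ?A2 (phi v) = groot ?A1 v" if v: "v \<in> gV ?A1" for v
  proof (cases "even v")
    case True
    then obtain x where x: "v = 2 * x" by auto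
    show ?thesis
    proof (cases "x \<in> fV1 ` gV ?K1")
      case True
      then obtain u where u: "u \<in> gV ?K1" "x = fV1 u" by auto
      have p1: "the_inv_into (gV ?K1) fV1 x = u" using u ijK1 by (simp add: the_inv_into_f_f)
      have fuK: "fV u \<in> gV ?K2" using u fK by auto
      have "fV2 (fV u) = x" using u fV2K K1L by auto
      then have p2: "the_inv_into (gV ?K2) fV2 x = hV u"
        using the_inv_into_f_f[OF ij2 fuK] fh u by auto
      have "glab ?R2 (hV u) = glab ?R1 u \<and> groot ?R2 (hV u) = groot ?R1 u"
        using iso_lab[OF iR] u K1R by auto
      then show ?thesis using x True p1 p2 key2 by (simp add: ph1 app_res_even)
    next
      case False
      then show ?thesis using x key2 by (simp add: ph1 app_res_even)
    qed
  next
    case False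
    then obtain w where w: "v = Suc (2*w)" "w \<in> gV ?R1" using v gV1 by auto
    then show ?thesis using iso_lab[OF iR w(2)] by (simp add: ph2 app_res_odd)
  qed
  have "iso ?A1 ?A2 phi psi" by (rule strict_iso[OF sA1 injphi injpsi imphi impsi edges nodes])
  then show ?thesis using m2 by blast
qed



lemma iso_refl: "stgood G \<Longrightarrow> iso G G id id"
  by (rule strict_iso) auto

lemma rule_iso_refl: "rwf r \<Longrightarrow> rule_iso r r"
  unfolding rule_iso_def
  by (rule exI[of _ id], rule exI[of _ id], rule exI[of _ id], rule exI[of _ id])
     (auto simp: rwf_def intro: iso_refl)

lemma rwf_parts: assumes "rwf r"
  shows "stgood (lhs r)" "stgood (rhs r)" "gV (intf r) \<subseteq> gV (lhs r)" "gV (intf r) \<subseteq> gV (rhs r)"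
     "gE (intf r) \<subseteq> gE (lhs r)" "gE (intf r) \<subseteq> gE (rhs r)"
  using assms by (auto simp: rwf_def subgraph_def)

lemma rule_iso_sym:
  assumes rw1: "rwf r1" and rw2: "rwf r2" and ri: "rule_iso r1 r2"
  shows "rule_iso r2 r1"
proof -
  let ?L1 = "lhs r1" and ?K1 = "intf r1" and ?R1 = "rhs r1"
  let ?L2 = "lhs r2" and ?K2 = "intf r2" and ?R2 = "rhs r2"
  obtain fV fE hV hE where iL: "iso ?L1 ?L2 fV fE" and iR: "iso ?R1 ?R2 hV hE"
    and fh: "\<forall>v\<in>gV ?K1. fV v = hV v" and fhE: "\<forall>e\<in>gE ?K1. fE e = hE e"
    and fK: "fV ` gV ?K1 = gV ?K2" and fKE: "fE ` gE ?K1 = gE ?K2"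
    and lb: "\<forall>v\<in>gV ?K1. glab ?K2 (fV v) = glab ?K1 v \<and> groot ?K2 (fV v) = groot ?K1 v"
    by (insert ri[unfolded rule_iso_def], elim exE conjE, rule that, assumption+)
  have p1: "stgood ?L1" "stgood ?R1" "gV ?K1 \<subseteq> gV ?L1" "gV ?K1 \<subseteq> gV ?R1" "gE ?K1 \<subseteq> gE ?L1" "gE ?K1 \<subseteq> gE ?R1"
    using rwf_parts[OF rw1] by auto
  have ifV: "inj_on fV (gV ?L1)" and ifE: "inj_on fE (gE ?L1)" using iL by (auto simp: iso_def bij_betw_def)
  have ihV: "inj_on hV (gV ?R1)" and ihE: "inj_on hE (gE ?R1)" using iR by (auto simp: iso_def bij_betw_def)
  let ?iV = "inv_into (gV ?L1) fV" and ?iE = "inv_into (gE ?L1) fE"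
  let ?jV = "inv_into (gV ?R1) hV" and ?jE = "inv_into (gE ?R1) hE"
  have A1: "iso ?L2 ?L1 ?iV ?iE" by (rule iso_sym[OF p1(1) iL])
  have A2: "iso ?R2 ?R1 ?jV ?jE" by (rule iso_sym[OF p1(2) iR])
  have A3: "\<forall>v\<in>gV ?K2. ?iV v = ?jV v \<and> (glab ?K1 (?iV v) = glab ?K2 v \<and> groot ?K1 (?iV v) = groot ?K2 v)"
  proof
    fix v assume "v \<in> gV ?K2"
    then obtain u where u: "u \<in> gV ?K1" "v = fV u" using fK by auto
    have uL: "u \<in> gV ?L1" and uR: "u \<in> gV ?R1" using u p1 by auto
    have e1: "inv_into (gV ?L1) fV v = u" unfolding u(2) by (rule inv_into_f_f[OF ifV uL])
    have e2: "inv_into (gV ?R1) hV v = u" unfolding u(2) using fh u(1) inv_into_f_f[OF ihV uR] by simp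
    show "?iV v = ?jV v \<and> (glab ?K1 (?iV v) = glab ?K2 v \<and> groot ?K1 (?iV v) = groot ?K2 v)"
      unfolding e1 e2 using u lb by simp
  qed
  have A4: "\<forall>e\<in>gE ?K2. ?iE e = ?jE e"
  proof
    fix e assume "e \<in> gE ?K2"
    then obtain u where u: "u \<in> gE ?K1" "e = fE u" using fKE by auto
    have uL: "u \<in> gE ?L1" and uR: "u \<in> gE ?R1" using u p1 by auto
    have e1: "inv_into (gE ?L1) fE e = u" unfolding u(2) by (rule inv_into_f_f[OF ifE uL])
    have e2: "inv_into (gE ?R1) hE e = u" unfolding u(2) using fhE u(1) inv_into_f_f[OF ihE uR] by simp
    show "?iE e = ?jE e" using e1 e2 by simp
  qed
  have A5: "?iV ` gV ?K2 = gV ?K1" using inv_into_image_cancel[OF ifV p1(3)] fK by simp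
  have A6: "?iE ` gE ?K2 = gE ?K1" using inv_into_image_cancel[OF ifE p1(5)] fKE by simp
  show ?thesis unfolding rule_iso_def
    apply (rule exI[of _ ?iV], rule exI[of _ ?iE], rule exI[of _ ?jV], rule exI[of _ ?jE])
    using A1 A2 A3 A4 A5 A6 by blast
qed

lemma rule_iso_trans:
  assumes rw3: "rwf r3" and ri1: "rule_iso r1 r2" and ri2: "rule_iso r2 r3"
  shows "rule_iso r1 r3"
proof -
  obtain fV fE hV hE where iL: "iso (lhs r1) (lhs r2) fV fE" and iR: "iso (rhs r1) (rhs r2) hV hE"
    and fh: "\<forall>v\<in>gV (intf r1). fV v = hV v" and fhE: "\<forall>e\<in>gE (intf r1). fE e = hE e"
    and fK: "fV ` gV (intf r1) = gV (intf r2)" and fKE: "fE ` gE (intf r1) = gE (intf r2)"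
    and lb: "\<forall>v\<in>gV (intf r1). glab (intf r2) (fV v) = glab (intf r1) v \<and> groot (intf r2) (fV v) = groot (intf r1) v"
    by (insert ri1[unfolded rule_iso_def], elim exE conjE, rule that, assumption+)
  obtain fV' fE' hV' hE' where iL': "iso (lhs r2) (lhs r3) fV' fE'" and iR': "iso (rhs r2) (rhs r3) hV' hE'"
    and fh': "\<forall>v\<in>gV (intf r2). fV' v = hV' v" and fhE': "\<forall>e\<in>gE (intf r2). fE' e = hE' e"
    and fK': "fV' ` gV (intf r2) = gV (intf r3)" and fKE': "fE' ` gE (intf r2) = gE (intf r3)"
    and lb': "\<forall>v\<in>gV (intf r2). glab (intf r3) (fV' v) = glab (intf r2) v \<and> groot (intf r3) (fV' v) = groot (intf r2) v"
    by (insert ri2[unfolded rule_iso_def], elim exE conjE, rule that, assumption+)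
  have s3: "stgood (lhs r3)" "stgood (rhs r3)" using rwf_parts[OF rw3] by auto
  have A1: "iso (lhs r1) (lhs r3) (fV' \<circ> fV) (fE' \<circ> fE)" by (rule iso_trans[OF s3(1) iL iL'])
  have A2: "iso (rhs r1) (rhs r3) (hV' \<circ> hV) (hE' \<circ> hE)" by (rule iso_trans[OF s3(2) iR iR'])
  have A3: "\<forall>v\<in>gV (intf r1). (fV' \<circ> fV) v = (hV' \<circ> hV) v \<and> (glab (intf r3) ((fV' \<circ> fV) v) = glab (intf r1) v \<and> groot (intf r3) ((fV' \<circ> fV) v) = groot (intf r1) v)"
  proof
    fix v assume v: "v \<in> gV (intf r1)"
    then have w: "fV v \<in> gV (intf r2)" using fK by auto
    show "(fV' \<circ> fV) v = (hV' \<circ> hV) v \<and> (glab (intf r3) ((fV' \<circ> fV) v) = glab (intf r1) v \<and> groot (intf r3) ((fV' \<circ> fV) v) = groot (intf r1) v)"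
      using v w fh fh' lb lb' by simp
  qed
  have A4: "\<forall>e\<in>gE (intf r1). (fE' \<circ> fE) e = (hE' \<circ> hE) e"
  proof
    fix e assume e: "e \<in> gE (intf r1)"
    then have "fE e \<in> gE (intf r2)" using fKE by auto
    then show "(fE' \<circ> fE) e = (hE' \<circ> hE) e" using e fhE fhE' by simp
  qed
  have A5: "(fV' \<circ> fV) ` gV (intf r1) = gV (intf r3)" using fK fK' by (simp only: image_comp[symmetric])
  have A6: "(fE' \<circ> fE) ` gE (intf r1) = gE (intf r3)" using fKE fKE' by (simp only: image_comp[symmetric])
  show ?thesis unfolding rule_iso_def
    apply (rule exI[of _ "fV' \<circ> fV"], rule exI[of _ "fE' \<circ> fE"], rule exI[of _ "hV' \<circ> hV"], rule exI[of _ "hE' \<circ> hE"])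
    using A1 A2 A3 A4 A5 A6 by blast
qed

lemma rule_iso_nf: "rule_iso r1 r2 \<Longrightarrow> rule_nf_iso r1 r2"
  unfolding rule_nf_iso_def rule_iso_def by auto

lemma nf_cls_eq:
  assumes rw1: "rwf r1" and rw2: "rwf r2" and ni: "rule_nf_iso r1 r2"
  shows "rule_cls LV LE rule_nf_iso r1 = rule_cls LV LE rule_nf_iso r2"
proof -
  have n1: "rwf (rule_nf r1)" and n2: "rwf (rule_nf r2)" using rw1 rw2 by (auto intro: rwf_nf)
  have sym: "rule_nf_iso r2 r1" using rule_iso_sym[OF n1 n2] ni by (simp add: rule_nf_iso_def)
  show ?thesis unfolding rule_cls_def rule_nf_iso_def
    using rule_iso_trans[OF n2 _ ni[unfolded rule_nf_iso_def]] rule_iso_trans[OF n1 _ sym[unfolded rule_nf_iso_def]]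
    by blast
qed

lemma img_eqI: "(\<And>a. a\<in>A \<Longrightarrow> \<exists>b\<in>B. f a = f b) \<Longrightarrow> (\<And>b. b\<in>B \<Longrightarrow> \<exists>a\<in>A. f b = f a) \<Longrightarrow> f ` A = f ` B"
  by (auto simp: image_def)

lemma P1:
  assumes g1: "gts LV LE R1" and g2: "gts LV LE R2" and gi: "gts_iso LV LE R1 R2"
  shows "norm_equiv LV LE R1 R2"
proof -
  have key: "\<exists>b\<in>Rb. rule_cls LV LE rule_nf_iso a = rule_cls LV LE rule_nf_iso b"
    if ga: "gts LV LE Ra" and gb: "gts LV LE Rb"
      and eq: "rule_cls LV LE rule_iso ` Ra = rule_cls LV LE rule_iso ` Rb" and a: "a \<in> Ra" for Ra Rb a
  proof -
    have wa: "wf_rule LV LE a" using ga a by (auto simp: gts_def)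
    obtain b where b: "b \<in> Rb" "rule_cls LV LE rule_iso a = rule_cls LV LE rule_iso b"
      using eq a by (metis imageE imageI)
    have wb: "wf_rule LV LE b" using gb b by (auto simp: gts_def)
    have "a \<in> rule_cls LV LE rule_iso a" using wa rule_iso_refl[OF wf_rule_rwf[OF wa]] by (simp add: rule_cls_def)
    then have "a \<in> rule_cls LV LE rule_iso b" using b(2) by simp
    then have "rule_iso a b" by (simp add: rule_cls_def)
    then have "rule_cls LV LE rule_nf_iso a = rule_cls LV LE rule_nf_iso b"
      by (rule nf_cls_eq[OF wf_rule_rwf[OF wa] wf_rule_rwf[OF wb] rule_iso_nf])
    then show ?thesis using b by blast
  qed
  show ?thesis unfolding norm_equiv_def
    apply (rule img_eqI)
    using key[OF g1 g2 gi[unfolded gts_iso_def]] key[OF g2 g1 gi[unfolded gts_iso_def, symmetric]] by auto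
qed

lemma steps_sub:
  assumes g1: "gts LV LE R1" and g2: "gts LV LE R2"
    and ne: "rule_cls LV LE rule_nf_iso ` R1 = rule_cls LV LE rule_nf_iso ` R2"
  shows "steps LV LE R1 \<subseteq> steps LV LE R2"
proof
  fix p assume "p \<in> steps LV LE R1"
  then obtain G H where p: "p = (cls LV LE G, cls LV LE H)" and tG: "tlrg LV LE G" and d: "derives LV LE R1 G H"
    by (auto simp: steps_def)
  obtain r1 fV1 fE1 where r1: "r1 \<in> R1" and m1: "is_match r1 G fV1 fE1" and gH: "graph_over LV LE H"
    and iH: "isomorphic H (app_res G r1 fV1 fE1)" using d by (auto simp: derives_def)
  have w1: "wf_rule LV LE r1" using g1 r1 by (auto simp: gts_def)
  obtain r2 where r2: "r2 \<in> R2" and ceq: "rule_cls LV LE rule_nf_iso r1 = rule_cls LV LE rule_nf_iso r2"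
    using ne r1 by (metis imageE imageI)
  have w2: "wf_rule LV LE r2" using g2 r2 by (auto simp: gts_def)
  have rw1: "rwf r1" and rw2: "rwf r2" using w1 w2 by (auto intro: wf_rule_rwf)
  have "r1 \<in> rule_cls LV LE rule_nf_iso r1"
    using w1 rule_iso_refl[OF rwf_nf[OF rw1]] by (simp add: rule_cls_def rule_nf_iso_def)
  then have "r1 \<in> rule_cls LV LE rule_nf_iso r2" using ceq by simp
  then have ni: "rule_iso (rule_nf r1) (rule_nf r2)" by (simp add: rule_cls_def rule_nf_iso_def)
  have sG: "stgood G" using tG by (auto simp: tlrg_def intro: graph_over_stgood)
  obtain fV2 fE2 phi psi where m2: "is_match r2 G fV2 fE2"
    and i12: "iso (app_res G (rule_nf r1) fV1 fE1) (app_res G (rule_nf r2) fV2 fE2) phi psi"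
    using nf_iso_app[OF sG rw1 rw2 ni m1] by blast
  have sn1: "stgood (app_res G (rule_nf r1) fV1 fE1)" using app_res_stgood[OF sG rwf_nf[OF rw1]] m1 by (simp add: is_match_nf)
  have sn2: "stgood (app_res G (rule_nf r2) fV2 fE2)" using app_res_stgood[OF sG rwf_nf[OF rw2]] m2 by (simp add: is_match_nf)
  have s2: "stgood (app_res G r2 fV2 fE2)" using app_res_stgood[OF sG rw2 m2] .
  obtain f g where a: "iso H (app_res G r1 fV1 fE1) f g" using iH by (auto simp: isomorphic_def)
  note b = iso_sym[OF sn1 nf_app_iso[OF sG rw1 m1]]
  note c = nf_app_iso[OF sG rw2 m2]
  note iso_trans[OF s2 iso_trans[OF sn2 iso_trans[OF sn1 a b] i12] c]
  then have "isomorphic H (app_res G r2 fV2 fE2)" unfolding isomorphic_def by blast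
  then have "derives LV LE R2 G H" using gH r2 m2 unfolding derives_def by blast
  then show "p \<in> steps LV LE R2" using p tG by (auto simp: steps_def)
qed

lemma P2:
  assumes g1: "gts LV LE R1" and g2: "gts LV LE R2" and ne: "norm_equiv LV LE R1 R2"
  shows "step_equiv LV LE R1 R2"
  using steps_sub[OF g1 g2] steps_sub[OF g2 g1] ne unfolding norm_equiv_def step_equiv_def
  by (metis subset_antisym)

lemma P3: "step_equiv LV LE R1 R2 \<Longrightarrow> sem_equiv LV LE R1 R2"
  by (simp add: step_equiv_def sem_equiv_def sem_def)



definition emp :: "'lv \<Rightarrow> ('lv,'le) lgraph" where
  "emp a = \<lparr>gV = {}, gE = {}, gsrc = (\<lambda>_. 0), gtgt = (\<lambda>_. 0), glab = (\<lambda>_. Some a),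
            gmrk = (\<lambda>_. undefined), groot = (\<lambda>_. Some False)\<rparr>"
definition nd :: "'lv \<Rightarrow> ('lv,'le) lgraph" where
  "nd a = (emp a)\<lparr>gV := {0}\<rparr>"

definition r_emp :: "'lv \<Rightarrow> ('lv,'le) lrule" where "r_emp a = \<lparr>lhs = emp a, intf = emp a, rhs = emp a\<rparr>"
definition r_id :: "'lv \<Rightarrow> ('lv,'le) lrule" where "r_id a = \<lparr>lhs = nd a, intf = nd a, rhs = nd a\<rparr>"
definition r_id' :: "'lv \<Rightarrow> ('lv,'le) lrule" where "r_id' a = \<lparr>lhs = nd a, intf = (nd a)\<lparr>glab := (\<lambda>_. None)\<rparr>, rhs = nd a\<rparr>"
definition r_add :: "'lv \<Rightarrow> ('lv,'le) lrule" where "r_add a = \<lparr>lhs = emp a, intf = emp a, rhs = nd a\<rparr>"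

lemmas gdefs = emp_def nd_def r_emp_def r_id_def r_id'_def r_add_def

lemma wf_ex: "wf_rule {a} LE (r_emp a)" "wf_rule {a} LE (r_id a)" "wf_rule {a} LE (r_id' a)" "wf_rule {a} LE (r_add a)"
  by (simp_all add: gdefs wf_rule_def tlrg_def graph_over_def subgraph_def)

lemma gts_ex: "finite LE \<Longrightarrow> gts {a} LE {r_emp a}" "finite LE \<Longrightarrow> gts {a} LE {r_id a}"
  "finite LE \<Longrightarrow> gts {a} LE {r_id' a}" "finite LE \<Longrightarrow> gts {a} LE {r_emp a, r_id a}"
  "finite LE \<Longrightarrow> gts {a} LE {r_emp a, r_add a}"
  by (simp_all add: gts_def wf_ex)

lemma ex_a: fixes a :: 'lv and LE :: "'le set" shows "norm_equiv {a} LE {r_id a} {r_id' a} \<and> \<not> gts_iso {a} LE {r_id a} {r_id' a}"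
proof
  have "rule_nf (r_id a) = (rule_nf (r_id' a) :: ('lv,'le) lrule)" by (simp add: gdefs rule_nf_def)
  then show "norm_equiv {a} LE {r_id a} {r_id' a}"
    by (simp add: norm_equiv_def rule_cls_def rule_nf_iso_def)
  show "\<not> gts_iso {a} LE {r_id a} {r_id' a}"
  proof
    assume "gts_iso {a} LE {r_id a} {r_id' a}"
    then have eq: "rule_cls {a} LE rule_iso (r_id a) = rule_cls {a} LE rule_iso (r_id' a)"
      by (simp add: gts_iso_def)
    have w: "wf_rule {a} LE (r_id a)" by (rule wf_ex(2))
    have "r_id a \<in> rule_cls {a} LE rule_iso (r_id a)"
      using w rule_iso_refl[OF wf_rule_rwf[OF w]] by (simp add: rule_cls_def)
    then have "r_id a \<in> rule_cls {a} LE rule_iso (r_id' a)" using eq by simp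
    then have "rule_iso (r_id a) (r_id' a :: ('lv,'le) lrule)" by (simp add: rule_cls_def)
    then show False by (auto simp: rule_iso_def gdefs)
  qed
qed



lemma iso_agree:
  assumes "gV A = gV B" "gE A = gE B"
    "\<forall>e\<in>gE A. gsrc A e = gsrc B e \<and> gtgt A e = gtgt B e \<and> gmrk A e = gmrk B e"
    "\<forall>v\<in>gV A. glab A v = glab B v \<and> groot A v = groot B v" "iso H A f g"
  shows "iso H B f g"
proof -
  have m1: "morph H A f g" and m2: "morph A H (inv_into (gV H) f) (inv_into (gE H) g)"
    and b: "bij_betw f (gV H) (gV A)" "bij_betw g (gE H) (gE A)" using assms(5) by (auto simp: iso_def)
  have "morph H B f g" using m1 assms(1-4) unfolding morph_def by (auto simp: image_subset_iff)
  moreover have "morph B H (inv_into (gV H) f) (inv_into (gE H) g)"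
    using m2 assms(1-4) unfolding morph_def by (auto simp: image_subset_iff)
  ultimately show ?thesis using b assms(1,2) by (simp add: iso_def)
qed

lemma match_emp: "is_match (r_emp a) G fV fE"
  by (simp add: is_match_def morph_def gdefs)

lemma res_emp:
  assumes "stgood G"
  shows "iso G (app_res G (r_emp a) fV fE) (\<lambda>x. 2*x) (\<lambda>x. 2*x)"
  by (rule strict_iso[OF assms]) (auto simp: inj_on_def app_res_gV app_res_gE app_res_even gdefs)

lemma agree_id:
  assumes "iso H (app_res G (r_id a) fV fE) f g"
  shows "iso H (app_res G (r_emp a) fV' fE') f g"
proof (rule iso_agree[OF _ _ _ _ assms])
  show "gV (app_res G (r_id a) fV fE) = gV (app_res G (r_emp a) fV' fE')"
    by (simp add: app_res_gV gdefs)
  show "gE (app_res G (r_id a) fV fE) = gE (app_res G (r_emp a) fV' fE')"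
    by (simp add: app_res_gE gdefs)
  show "\<forall>e\<in>gE (app_res G (r_id a) fV fE). gsrc (app_res G (r_id a) fV fE) e = gsrc (app_res G (r_emp a) fV' fE') e \<and>
      gtgt (app_res G (r_id a) fV fE) e = gtgt (app_res G (r_emp a) fV' fE') e \<and>
      gmrk (app_res G (r_id a) fV fE) e = gmrk (app_res G (r_emp a) fV' fE') e"
    by (auto simp: app_res_gE app_res_even gdefs)
  show "\<forall>v\<in>gV (app_res G (r_id a) fV fE). glab (app_res G (r_id a) fV fE) v = glab (app_res G (r_emp a) fV' fE') v \<and>
      groot (app_res G (r_id a) fV fE) v = groot (app_res G (r_emp a) fV' fE') v"
    by (auto simp: app_res_gV app_res_even gdefs)
qed

lemma steps_b: "steps {a} LE {r_emp a, r_id a} = steps {a} LE {r_emp a}"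
proof
  show "steps {a} LE {r_emp a} \<subseteq> steps {a} LE {r_emp a, r_id a}"
    unfolding steps_def derives_def by blast
next
  show "steps {a} LE {r_emp a, r_id a} \<subseteq> steps {a} LE {r_emp a}"
  proof
    fix p assume "p \<in> steps {a} LE {r_emp a, r_id a}"
    then obtain G H where p: "p = (cls {a} LE G, cls {a} LE H)" and tG: "tlrg {a} LE G"
      and d: "derives {a} LE {r_emp a, r_id a} G H" by (auto simp: steps_def)
    obtain r fV fE f g where r: "r = r_emp a \<or> r = r_id a" and m: "is_match r G fV fE"
      and gH: "graph_over {a} LE H" and i: "iso H (app_res G r fV fE) f g"
      using d unfolding derives_def isomorphic_def by blast
    have "iso H (app_res G (r_emp a) fV fE) f g"
      using r i agree_id[of H G a fV fE f g fV fE] by auto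
    then have "derives {a} LE {r_emp a} G H"
      using gH match_emp[of a G fV fE] unfolding derives_def isomorphic_def by blast
    then show "p \<in> steps {a} LE {r_emp a}" using p tG by (auto simp: steps_def)
  qed
qed

lemma ex_b: fixes a :: 'lv and LE :: "'le set"
  shows "step_equiv {a} LE {r_emp a, r_id a} {r_emp a} \<and> \<not> norm_equiv {a} LE {r_emp a, r_id a} {r_emp a}"
proof
  show "step_equiv {a} LE {r_emp a, r_id a} {r_emp a}" by (simp add: step_equiv_def steps_b)
  show "\<not> norm_equiv {a} LE {r_emp a, r_id a} {r_emp a}"
  proof
    assume "norm_equiv {a} LE {r_emp a, r_id a} {r_emp a}"
    then have eq: "rule_cls {a} LE rule_nf_iso (r_id a) = rule_cls {a} LE rule_nf_iso (r_emp a)"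
      by (auto simp: norm_equiv_def)
    have w: "wf_rule {a} LE (r_id a)" by (rule wf_ex(2))
    have "r_id a \<in> rule_cls {a} LE rule_nf_iso (r_id a)"
      using w rule_iso_refl[OF rwf_nf[OF wf_rule_rwf[OF w]]] by (simp add: rule_cls_def rule_nf_iso_def)
    then have "r_id a \<in> rule_cls {a} LE rule_nf_iso (r_emp a)" using eq by simp
    then have "rule_iso (rule_nf (r_id a)) (rule_nf (r_emp a :: ('lv,'le) lrule))"
      by (simp add: rule_cls_def rule_nf_iso_def)
    then show False by (auto simp: rule_iso_def iso_def bij_betw_def gdefs)
  qed
qed



lemma tlrg_stgood: "tlrg LV LE G \<Longrightarrow> stgood G"
  by (auto simp: tlrg_def intro: graph_over_stgood)

lemma iso_refl_cls: "tlrg LV LE G \<Longrightarrow> G \<in> cls LV LE G"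
proof -
  assume t: "tlrg LV LE G"
  have "iso G G id id" by (rule iso_refl[OF tlrg_stgood[OF t]])
  then show ?thesis using t unfolding cls_def isomorphic_def by blast
qed

lemma loop_step:
  assumes rR: "r_emp a \<in> R" and tG: "tlrg {a} LE G"
  shows "(cls {a} LE G, cls {a} LE G) \<in> steps {a} LE R"
proof -
  have "derives {a} LE R G G"
    using rR tG res_emp[OF tlrg_stgood[OF tG], of a id id] match_emp[of a G id id]
    unfolding derives_def isomorphic_def tlrg_def by blast
  then show ?thesis using tG by (auto simp: steps_def)
qed

lemma res_total:
  assumes r: "r = r_emp a \<or> r = r_add a" and tG: "tlrg {a} LE G" and y: "y \<in> gV (app_res G r fV fE)"
  shows "glab (app_res G r fV fE) y \<noteq> None \<and> groot (app_res G r fV fE) y \<noteq> None"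
proof (cases "even y")
  case True
  then obtain x where x: "y = 2 * x" by auto
  then have "x \<in> gV G" using y r by (auto simp: app_res_gV gdefs)
  then show ?thesis using x r tG by (auto simp: app_res_even gdefs tlrg_def)
next
  case False
  then obtain x where x: "y = Suc (2 * x)" by (metis oddE Suc_eq_plus1)
  then show ?thesis using r by (auto simp: app_res_odd gdefs)
qed

lemma derives_tlrg:
  assumes R: "R \<subseteq> {r_emp a, r_add a}" and tG: "tlrg {a} LE G" and d: "derives {a} LE R G H"
  shows "tlrg {a} LE H"
proof -
  obtain r fV fE f g where r: "r \<in> R" and gH: "graph_over {a} LE H" and i: "iso H (app_res G r fV fE) f g"
    using d unfolding derives_def isomorphic_def by blast
  have r2: "r = r_emp a \<or> r = r_add a" using r R by auto
  have "glab H v \<noteq> None \<and> groot H v \<noteq> None" if v: "v \<in> gV H" for v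
  proof -
    have fv: "f v \<in> gV (app_res G r fV fE)" using i v by (auto simp: iso_def bij_betw_def)
    show ?thesis using iso_lab[OF i v] res_total[OF r2 tG fv] by simp
  qed
  then show ?thesis using gH by (simp add: tlrg_def)
qed

lemma reach:
  assumes R: "R \<subseteq> {r_emp a, r_add a}" and st: "(X, Y) \<in> (steps {a} LE R)\<^sup>*"
    and X: "X = cls {a} LE G0" and t0: "tlrg {a} LE G0"
  shows "\<exists>G. tlrg {a} LE G \<and> Y = cls {a} LE G"
  using st
proof (induction rule: rtrancl_induct)
  case base
  then show ?case using X t0 by blast
next
  case (step Y Z)
  then obtain G H where "Z = cls {a} LE H" "tlrg {a} LE G" "derives {a} LE R G H"
    by (auto simp: steps_def)
  then show ?case using derives_tlrg[OF R] by blast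
qed

lemma sem_c:
  fixes a :: 'lv and LE :: "'le set"
  assumes rR: "r_emp a \<in> R" and R: "R \<subseteq> {r_emp a, r_add a}" and X: "X \<in> classes {a} LE"
  shows "sem {a} LE R X = {None}"
proof -
  obtain G0 where X0: "X = cls {a} LE G0" and t0: "tlrg {a} LE G0" using X by (auto simp: classes_def)
  have nonf: "{Some Y | Y. (X, Y) \<in> (steps {a} LE R)\<^sup>* \<and> (\<nexists>Z. (Y, Z) \<in> steps {a} LE R)} = {}"
  proof -
    have "\<exists>Z. (Y, Z) \<in> steps {a} LE R" if "(X, Y) \<in> (steps {a} LE R)\<^sup>*" for Y
      using reach[OF R that X0 t0] loop_step[OF rR] by blast
    then show ?thesis by blast
  qed
  have "(X, X) \<in> steps {a} LE R" using loop_step[OF rR t0] X0 by simp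
  then have "\<exists>s :: nat \<Rightarrow> ('lv, 'le) lgraph set. s 0 = X \<and> (\<forall>i. (s i, s (Suc i)) \<in> steps {a} LE R)"
    by (intro exI[of _ "\<lambda>_. X"]) simp
  then show ?thesis unfolding sem_def nonf by simp
qed



lemma iso_gV_empty: "iso G H f g \<Longrightarrow> gV G = {} \<longleftrightarrow> gV H = {}"
  by (auto simp: iso_def bij_betw_def)

lemma not_steps_c:
  fixes a :: 'lv and LE :: "'le set"
  shows "steps {a} LE {r_emp a, r_add a} \<noteq> steps {a} LE {r_emp a}"
proof
  assume eq: "steps {a} LE {r_emp a, r_add a} = steps {a} LE {r_emp a}"
  define A0 :: "('lv,'le) lgraph" where "A0 = app_res (emp a) (r_add a) id id"
  have tE: "tlrg {a} LE (emp a :: ('lv,'le) lgraph)" by (simp add: gdefs tlrg_def graph_over_def)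
  have tA: "tlrg {a} LE A0" by (simp add: A0_def app_res_def Let_def gdefs tlrg_def graph_over_def)
  have gA: "gV A0 = {Suc 0}" by (simp add: A0_def app_res_gV gdefs)
  have mA: "is_match (r_add a) (emp a :: ('lv,'le) lgraph) id id" by (simp add: is_match_def morph_def gdefs)
  have "iso A0 A0 id id" by (rule iso_refl[OF tlrg_stgood[OF tA]])
  then have "derives {a} LE {r_emp a, r_add a} (emp a) A0"
    using tA mA unfolding derives_def isomorphic_def tlrg_def A0_def by blast
  then have "(cls {a} LE (emp a), cls {a} LE A0) \<in> steps {a} LE {r_emp a, r_add a}"
    using tE unfolding steps_def by blast
  then have "(cls {a} LE (emp a), cls {a} LE A0) \<in> steps {a} LE {r_emp a}"
    using eq by simp
  then obtain G H where c1: "cls {a} LE (emp a) = cls {a} LE G" and c2: "cls {a} LE A0 = cls {a} LE H"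
    and tG: "tlrg {a} LE G" and d: "derives {a} LE {r_emp a} G H" by (auto simp: steps_def)
  have "G \<in> cls {a} LE (emp a)" using iso_refl_cls[OF tG] c1 by simp
  then obtain f g where "iso (emp a) G f g" by (auto simp: cls_def isomorphic_def)
  then have gG: "gV G = {}" using iso_gV_empty by (fastforce simp: gdefs)
  obtain fV fE f' g' where i: "iso H (app_res G (r_emp a) fV fE) f' g'"
    using d unfolding derives_def isomorphic_def by blast
  have "gV (app_res G (r_emp a) fV fE) = {}" using gG by (simp add: app_res_gV gdefs)
  then have gH: "gV H = {}" using iso_gV_empty[OF i] by simp
  have "A0 \<in> cls {a} LE H" using iso_refl_cls[OF tA] c2 by simp
  then obtain f2 g2 where "iso H A0 f2 g2" by (auto simp: cls_def isomorphic_def)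
  then show False using iso_gV_empty gH gA by fastforce
qed

theorem theorem3p4:
  fixes LV :: "'lv set" and LE :: "'le set"
  shows "(\<forall>R1 R2. gts LV LE R1 \<and> gts LV LE R2 \<longrightarrow>
            (gts_iso LV LE R1 R2 \<longrightarrow> norm_equiv LV LE R1 R2) \<and>
            (norm_equiv LV LE R1 R2 \<longrightarrow> step_equiv LV LE R1 R2) \<and>
            (step_equiv LV LE R1 R2 \<longrightarrow> sem_equiv LV LE R1 R2)) \<and>
         (\<exists>(LV' :: 'lv set) (LE' :: 'le set) R1 R2. gts LV' LE' R1 \<and> gts LV' LE' R2 \<and>
            norm_equiv LV' LE' R1 R2 \<and> \<not> gts_iso LV' LE' R1 R2) \<and>
         (\<exists>(LV' :: 'lv set) (LE' :: 'le set) R1 R2. gts LV' LE' R1 \<and> gts LV' LE' R2 \<and>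
            step_equiv LV' LE' R1 R2 \<and> \<not> norm_equiv LV' LE' R1 R2) \<and>
         (\<exists>(LV' :: 'lv set) (LE' :: 'le set) R1 R2. gts LV' LE' R1 \<and> gts LV' LE' R2 \<and>
            sem_equiv LV' LE' R1 R2 \<and> \<not> step_equiv LV' LE' R1 R2)"
proof (intro conjI)
  show "\<forall>R1 R2. gts LV LE R1 \<and> gts LV LE R2 \<longrightarrow>
            (gts_iso LV LE R1 R2 \<longrightarrow> norm_equiv LV LE R1 R2) \<and>
            (norm_equiv LV LE R1 R2 \<longrightarrow> step_equiv LV LE R1 R2) \<and>
            (step_equiv LV LE R1 R2 \<longrightarrow> sem_equiv LV LE R1 R2)"
  proof (intro allI impI conjI)
    fix R1 R2 assume g: "gts LV LE R1 \<and> gts LV LE R2"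
    show "gts_iso LV LE R1 R2 \<Longrightarrow> norm_equiv LV LE R1 R2" using P1 g by blast
    show "norm_equiv LV LE R1 R2 \<Longrightarrow> step_equiv LV LE R1 R2" using P2 g by blast
    show "step_equiv LV LE R1 R2 \<Longrightarrow> sem_equiv LV LE R1 R2" using P3 by blast
  qed
  define a :: 'lv where "a = undefined"
  define E :: "'le set" where "E = {}"
  have fE: "finite E" by (simp add: E_def)
  show "\<exists>(LV' :: 'lv set) (LE' :: 'le set) R1 R2. gts LV' LE' R1 \<and> gts LV' LE' R2 \<and>
            norm_equiv LV' LE' R1 R2 \<and> \<not> gts_iso LV' LE' R1 R2"
    apply (rule exI[of _ "{a}"], rule exI[of _ E], rule exI[of _ "{r_id a}"], rule exI[of _ "{r_id' a}"])
    using gts_ex(2,3)[OF fE, of a] ex_a[of a E] by simp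
  show "\<exists>(LV' :: 'lv set) (LE' :: 'le set) R1 R2. gts LV' LE' R1 \<and> gts LV' LE' R2 \<and>
            step_equiv LV' LE' R1 R2 \<and> \<not> norm_equiv LV' LE' R1 R2"
    apply (rule exI[of _ "{a}"], rule exI[of _ E], rule exI[of _ "{r_emp a, r_id a}"], rule exI[of _ "{r_emp a}"])
    using gts_ex(1,4)[OF fE, of a] ex_b[of a E] by simp
  have S1: "sem_equiv {a} E {r_emp a, r_add a} {r_emp a}"
    unfolding sem_equiv_def
  proof
    fix X assume X: "X \<in> classes {a} E"
    have "sem {a} E {r_emp a, r_add a} X = {None}" by (rule sem_c[OF _ _ X]) auto
    moreover have "sem {a} E {r_emp a} X = {None}" by (rule sem_c[OF _ _ X]) auto
    ultimately show "sem {a} E {r_emp a, r_add a} X = sem {a} E {r_emp a} X" by simp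
  qed
  have S2: "\<not> step_equiv {a} E {r_emp a, r_add a} {r_emp a}"
    using not_steps_c[of a E] by (simp add: step_equiv_def)
  show "\<exists>(LV' :: 'lv set) (LE' :: 'le set) R1 R2. gts LV' LE' R1 \<and> gts LV' LE' R2 \<and>
            sem_equiv LV' LE' R1 R2 \<and> \<not> step_equiv LV' LE' R1 R2"
    apply (rule exI[of _ "{a}"], rule exI[of _ E], rule exI[of _ "{r_emp a, r_add a}"], rule exI[of _ "{r_emp a}"])
    using gts_ex(1,5)[OF fE, of a] S1 S2 by simp
qed

end
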